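(* Let $n, s, t$ be positive integers. Let $S_1,\dots, S_s \subseteq \{1,\dots,n\}$ be non-empty pairwise disjoint sets and $T_1,\dots, T_t \subseteq \{1,\dots,n\}$ be non-empty pairwise disjoint sets such that: 1. $\bigcup_{p=1}^s S_p = \bigcup_{q=1}^t T_q=\{1,\dots,n\}$. 2. For any subsets $\theta_1 \subseteq \{1,\dots,s\}$ and $\theta_2 \subseteq \{1,\dots,t\}$, if $\bigcup_{p \in\theta_1} S_p = \bigcup_{q \in\theta_2} T_q=\Gamma$ for some $\Gamma \subseteq \{1,\dots,n\}$, then $\Gamma \in \{\emptyset, \{1,\dots,n\}\}$. Then there exist an integer $l\geq 2$ and a finite sequence of sets $L_1,\dots, L_l \in \{S_1,\dots, S_s\} \cup \{T_1, \dots, T_t\}$ such that $\bigcup_{p=1}^l L_p = \{1,\dots,n\}$, and for all $p \in \{1,\dots,l-1\}$, $(L_1 \cup \dots \cup L_p) \cap L_{p+1} \neq \emptyset$. *)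

theory Defs
  imports Main
begin

end

theory Submission
  imports Defs
begin

definition chn :: "nat set set \<Rightarrow> nat \<Rightarrow> (nat \<Rightarrow> nat set) \<Rightarrow> bool" where
"chn F l L \<longleftrightarrow> l \<ge> 1 \<and> (\<forall>p\<in>{1..l}. L p \<in> F) \<and>
   (\<forall>p\<in>{1..l-1}. (\<Union>i\<in>{1..p}. L i) \<inter> L (p+1) \<noteq> {})"

lemma chn_ext:
  assumes c: "chn F l L" and X: "X \<in> F" and I: "(\<Union>i\<in>{1..l}. L i) \<inter> X \<noteq> {}"
  shows "chn F (Suc l) (L(Suc l := X))"
    and "(\<Union>i\<in>{1..Suc l}. (L(Suc l := X)) i) = (\<Union>i\<in>{1..l}. L i) \<union> X"
proof -
  have eq: "(\<Union>i\<in>{1..p}. (L(Suc l := X)) i) = (\<Union>i\<in>{1..p}. L i)" if "p \<le> l" for p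
    using that by (intro SUP_cong) auto
  show "(\<Union>i\<in>{1..Suc l}. (L(Suc l := X)) i) = (\<Union>i\<in>{1..l}. L i) \<union> X"
  proof -
    have "{1..Suc l} = insert (Suc l) {1..l}" by auto
    then show ?thesis by (simp only: UN_insert fun_upd_same eq[OF order_refl] Un_commute)
  qed
  show "chn F (Suc l) (L(Suc l := X))"
    unfolding chn_def
  proof (intro conjI ballI)
    show "1 \<le> Suc l" by simp
  next
    fix p assume "p \<in> {1..Suc l}"
    then show "(L(Suc l := X)) p \<in> F" using c X unfolding chn_def by auto
  next
    fix p assume p: "p \<in> {1..Suc l - 1}"
    show "(\<Union>i\<in>{1..p}. (L(Suc l := X)) i) \<inter> (L(Suc l := X)) (p + 1) \<noteq> {}"
    proof (cases "p = l")
      case True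
      then show ?thesis using eq[of l] I by simp
    next
      case False
      then have "p \<in> {1..l-1}" "p \<le> l" using p by auto
      then show ?thesis using eq[of p] c False unfolding chn_def by auto
    qed
  qed
qed

theorem lemma1:
  fixes n s t :: nat and S T :: "nat \<Rightarrow> nat set"
  assumes "n \<ge> 1" and "s \<ge> 1" and "t \<ge> 1"
    and S_sub: "\<forall>p\<in>{1..s}. S p \<subseteq> {1..n} \<and> S p \<noteq> {}"
    and T_sub: "\<forall>q\<in>{1..t}. T q \<subseteq> {1..n} \<and> T q \<noteq> {}"
    and S_disj: "\<forall>p\<in>{1..s}. \<forall>p'\<in>{1..s}. p \<noteq> p' \<longrightarrow> S p \<inter> S p' = {}"
    and T_disj: "\<forall>q\<in>{1..t}. \<forall>q'\<in>{1..t}. q \<noteq> q' \<longrightarrow> T q \<inter> T q' = {}"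
    and S_cover: "(\<Union>p\<in>{1..s}. S p) = {1..n}"
    and T_cover: "(\<Union>q\<in>{1..t}. T q) = {1..n}"
    and indec: "\<forall>\<theta>1 \<theta>2 \<Gamma>. \<theta>1 \<subseteq> {1..s} \<and> \<theta>2 \<subseteq> {1..t} \<and>
                  (\<Union>p\<in>\<theta>1. S p) = \<Gamma> \<and> (\<Union>q\<in>\<theta>2. T q) = \<Gamma>
                  \<longrightarrow> \<Gamma> \<in> {{}, {1..n}}"
  shows "\<exists>l::nat. \<exists>L :: nat \<Rightarrow> nat set. l \<ge> 2 \<and>
           (\<forall>p\<in>{1..l}. L p \<in> S ` {1..s} \<union> T ` {1..t}) \<and>
           (\<Union>p\<in>{1..l}. L p) = {1..n} \<and>
           (\<forall>p\<in>{1..l-1}. (\<Union>i\<in>{1..p}. L i) \<inter> L (p+1) \<noteq> {})"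
proof -
  define F where "F = S ` {1..s} \<union> T ` {1..t}"
  have Fsub: "\<And>X. X \<in> F \<Longrightarrow> X \<subseteq> {1..n} \<and> X \<noteq> {}"
    using S_sub T_sub unfolding F_def by auto
  have key: "\<exists>X\<in>F. X \<inter> U \<noteq> {} \<and> \<not> X \<subseteq> U"
    if U: "U \<subseteq> {1..n}" "U \<noteq> {}" "U \<noteq> {1..n}" for U
  proof (rule ccontr)
    assume "\<not> ?thesis"
    then have h: "\<forall>X\<in>F. X \<inter> U = {} \<or> X \<subseteq> U" by blast
    have e1: "(\<Union>p\<in>{p\<in>{1..s}. S p \<subseteq> U}. S p) = U"
    proof
      show "U \<subseteq> (\<Union>p\<in>{p\<in>{1..s}. S p \<subseteq> U}. S p)"
      proof
        fix x assume "x \<in> U"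
        then obtain p where "p \<in> {1..s}" "x \<in> S p" using U(1) S_cover by blast
        moreover have "S p \<in> F" using \<open>p \<in> {1..s}\<close> unfolding F_def by auto
        ultimately show "x \<in> (\<Union>p\<in>{p\<in>{1..s}. S p \<subseteq> U}. S p)"
          using h \<open>x \<in> U\<close> by blast
      qed
    qed auto
    have e2: "(\<Union>p\<in>{p\<in>{1..t}. T p \<subseteq> U}. T p) = U"
    proof
      show "U \<subseteq> (\<Union>p\<in>{p\<in>{1..t}. T p \<subseteq> U}. T p)"
      proof
        fix x assume "x \<in> U"
        then obtain p where "p \<in> {1..t}" "x \<in> T p" using U(1) T_cover by blast
        moreover have "T p \<in> F" using \<open>p \<in> {1..t}\<close> unfolding F_def by auto
        ultimately show "x \<in> (\<Union>p\<in>{p\<in>{1..t}. T p \<subseteq> U}. T p)"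
          using h \<open>x \<in> U\<close> by blast
      qed
    qed auto
    have "U \<in> {{}, {1..n}}"
      using indec[rule_format, of "{p\<in>{1..s}. S p \<subseteq> U}" "{p\<in>{1..t}. T p \<subseteq> U}" U] e1 e2
      by blast
    then show False using U by blast
  qed
  have ind: "\<exists>l L. chn F l L \<and> ((\<Union>i\<in>{1..l}. L i) = {1..n} \<or> card (\<Union>i\<in>{1..l}. L i) \<ge> k)" for k
  proof (induction k)
    case 0
    have "chn F 1 (\<lambda>_. S 1)" unfolding chn_def F_def using assms(2) by auto
    then show ?case by blast
  next
    case (Suc k)
    then obtain l L where c: "chn F l L" and d: "(\<Union>i\<in>{1..l}. L i) = {1..n} \<or> card (\<Union>i\<in>{1..l}. L i) \<ge> k"
      by blast
    show ?case
    proof (cases "(\<Union>i\<in>{1..l}. L i) = {1..n}")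
      case True then show ?thesis using c by blast
    next
      case False
      define U where "U = (\<Union>i\<in>{1..l}. L i)"
      have Usub: "U \<subseteq> {1..n}" using c Fsub unfolding U_def chn_def by fastforce
      have "L 1 \<noteq> {}" using c Fsub unfolding chn_def by auto
      moreover have "L 1 \<subseteq> U" using c unfolding U_def chn_def by auto
      ultimately have Une: "U \<noteq> {}" by blast
      obtain X where X: "X \<in> F" "X \<inter> U \<noteq> {}" "\<not> X \<subseteq> U"
        using key[OF Usub Une] False unfolding U_def by blast
      have c2: "chn F (Suc l) (L(Suc l := X))"
        and u2: "(\<Union>i\<in>{1..Suc l}. (L(Suc l := X)) i) = U \<union> X"
        using chn_ext[OF c X(1)] X(2) unfolding U_def by blast+
      have "finite (U \<union> X)" using Usub Fsub[OF X(1)] by (meson finite_Un finite_atLeastAtMost finite_subset)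
      moreover have "U \<subset> U \<union> X" using X(3) by blast
      ultimately have "card U < card (U \<union> X)" by (simp add: psubset_card_mono)
      moreover have "card U \<ge> k" using d False unfolding U_def by blast
      ultimately show ?thesis using c2 u2 by (metis Suc_le_eq order_le_less_trans)
    qed
  qed
  obtain l L where c: "chn F l L" and d: "(\<Union>i\<in>{1..l}. L i) = {1..n} \<or> card (\<Union>i\<in>{1..l}. L i) \<ge> Suc n"
    using ind[of "Suc n"] by blast
  have "(\<Union>i\<in>{1..l}. L i) \<subseteq> {1..n}" using c Fsub unfolding chn_def by fastforce
  then have "card (\<Union>i\<in>{1..l}. L i) \<le> n" by (metis card_atLeastAtMost card_mono finite_atLeastAtMost diff_Suc_1)
  then have full: "(\<Union>i\<in>{1..l}. L i) = {1..n}" using d by linarith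
  show ?thesis
  proof (cases "l \<ge> 2")
    case True
    then show ?thesis using c full unfolding chn_def F_def by blast
  next
    case False
    then have l1: "l = 1" using c unfolding chn_def by auto
    have "L 1 \<noteq> {}" "L 1 \<in> F" using c Fsub unfolding chn_def by auto
    have "chn F 2 (L(2 := L 1))"
      using chn_ext(1)[OF c \<open>L 1 \<in> F\<close>] \<open>L 1 \<noteq> {}\<close> l1 by (simp add: numeral_2_eq_2)
    moreover have "(\<Union>i\<in>{1..2}. (L(2 := L 1)) i) = {1..n}"
      using chn_ext(2)[OF c \<open>L 1 \<in> F\<close>] \<open>L 1 \<noteq> {}\<close> l1 full by (simp add: numeral_2_eq_2)
    ultimately show ?thesis unfolding chn_def F_def by (intro exI[of _ 2] exI[of _ "L(2 := L 1)"]) auto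
  qed
qed

end
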